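(* Let $\theta\in(0,\pi)$ and let $f_\theta=h_\theta+\overline{g_\theta}\in S_H$ with $h_\theta(z)+g_\theta(z)=\dfrac{1}{2i\sin\theta}\log\!\left(\dfrac{1+ze^{i\theta}}{1+ze^{-i\theta}}\right)$ (principal branch, vanishing at $0$). Let $\alpha\in[-1,1]$ and let $f_\alpha=h_\alpha+\overline{g_\alpha}\in S_H$ with $h_\alpha(z)+g_\alpha(z)=\dfrac{z(1-\alpha z)}{1-z^2}$. Let $0\le t\le1$ and $f_{\theta,\alpha}=tf_\theta+(1-t)f_\alpha$. If $f_{\theta,\alpha}$ is locally univalent and sense-preserving in $E$, then $f_{\theta,\alpha}\in S_H$ and $f_{\theta,\alpha}$ maps $E$ onto a domain convex in the direction of the imaginary axis.
   Context: $E=\{z\in\mathbb{C}:|z|<1\}$. A harmonic mapping $f=h+\overline{g}$ on $E$ (with $h,g$ analytic) is locally univalent and sense-preserving iff $h'\neq0$ in $E$ and its dilatation $\omega=g'/h'$ satisfies $|\omega|<1$ in $E$. $S_H$ denotes the class of harmonic, univalent, sense-preserving mappings $f=h+\overline{g}$ of $E$ normalized by $f(0)=0$, $f_z(0)=1$. A domain $\Omega$ is convex in the direction of the imaginary axis if every line parallel to the imaginary axis has connected or empty intersection with $\Omega$. *)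

theory Defs
  imports "HOL-Analysis.Analysis"
begin

definition unit_disk :: "complex set" ("\<E>") where
  "unit_disk = ball 0 1"

definition harm :: "(complex \<Rightarrow> complex) \<Rightarrow> (complex \<Rightarrow> complex) \<Rightarrow> complex \<Rightarrow> complex" where
  "harm h g = (\<lambda>z. h z + cnj (g z))"

definition loc_univ_sense_pres :: "(complex \<Rightarrow> complex) \<Rightarrow> (complex \<Rightarrow> complex) \<Rightarrow> bool" where
  "loc_univ_sense_pres h g \<longleftrightarrow>
     (\<forall>z\<in>\<E>. deriv h z \<noteq> 0 \<and> cmod (deriv g z / deriv h z) < 1)"

definition S_H :: "(complex \<Rightarrow> complex) \<Rightarrow> (complex \<Rightarrow> complex) \<Rightarrow> bool" where
  "S_H h g \<longleftrightarrow> h holomorphic_on \<E> \<and> g holomorphic_on \<E> \<and>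
     inj_on (harm h g) \<E> \<and> loc_univ_sense_pres h g \<and>
     harm h g 0 = 0 \<and> deriv h 0 = 1"

definition convex_imag_dir :: "complex set \<Rightarrow> bool" where
  "convex_imag_dir \<Omega> \<longleftrightarrow> (\<forall>x::real. connected (\<Omega> \<inter> {w. Re w = x}))"

end

theory Submission
  imports Defs "HOL-Complex_Analysis.Complex_Analysis" "HOL-Real_Asymp.Real_Asymp"
begin


definition Tm :: "complex \<Rightarrow> complex" where
  "Tm \<zeta> = (exp (2*\<zeta>) - 1) / (exp (2*\<zeta>) + 1)"

definition Sst :: "complex set" where "Sst = {\<zeta>. \<bar>Im \<zeta>\<bar> < pi/4}"

lemma Re_exp2_pos: assumes "\<zeta> \<in> Sst" shows "Re (exp (2*\<zeta>)) > 0"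
proof -
  have "\<bar>2 * Im \<zeta>\<bar> < pi/2" using assms by (simp add: Sst_def)
  hence "cos (2 * Im \<zeta>) > 0" by (intro cos_gt_zero_pi) auto
  thus ?thesis by (simp add: Re_exp)
qed

lemma Re_quot_pos: fixes w :: complex assumes "cmod w < 1" shows "Re ((1 - w) / (1 + w)) > 0"
proof -
  have ne: "1 + w \<noteq> 0" using assms by (metis add.inverse_unique norm_minus_cancel norm_one less_irrefl)
  have "(cmod w)^2 < 1" using assms by (simp add: power_less_one_iff)
  hence n2: "(Re w)^2 + (Im w)^2 < 1" by (simp add: cmod_power2)
  have d: "(1 + Re w)^2 + (Im w)^2 > 0" using ne by (simp add: complex_eq_iff add_pos_nonneg sum_power2_gt_zero_iff) 
  have "Re ((1 - w) / (1 + w)) = (1 - ((Re w)^2 + (Im w)^2)) / ((1 + Re w)^2 + (Im w)^2)"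
    by (simp add: Re_divide power2_eq_square algebra_simps)
  thus ?thesis using n2 d by simp
qed

lemma Tm_in: assumes "\<zeta> \<in> Sst" shows "Tm \<zeta> \<in> \<E>" "exp (2*\<zeta>) + 1 \<noteq> 0"
proof -
  define u where "u = exp (2*\<zeta>)"
  have R: "Re u > 0" using Re_exp2_pos[OF assms] by (simp add: u_def)
  have "Re (u + 1) > 0" using R by simp
  thus ne: "exp (2*\<zeta>) + 1 \<noteq> 0" unfolding u_def by (metis less_irrefl zero_complex.simps(1))
  have "(cmod (u - 1))^2 < (cmod (u + 1))^2" using R
    unfolding cmod_power2 by (simp add: power2_eq_square algebra_simps)
  hence "cmod (u - 1) < cmod (u + 1)" using power2_less_imp_less by fastforce
  thus "Tm \<zeta> \<in> \<E>" using ne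
    by (simp add: Tm_def unit_disk_def u_def[symmetric] norm_divide divide_less_eq)
qed

lemma Tm_surj: assumes "z \<in> \<E>" shows "\<exists>\<zeta>\<in>Sst. Tm \<zeta> = z"
proof -
  have nz: "cmod z < 1" using assms by (simp add: unit_disk_def)
  hence z1: "1 - z \<noteq> 0" by auto
  define w where "w = (1 + z) / (1 - z)"
  have "Re w > 0" using Re_quot_pos[of "-z"] nz by (simp add: w_def)
  hence w0: "w \<noteq> 0" by auto
  define \<zeta> where "\<zeta> = Ln w / 2"
  have "\<bar>Im (Ln w)\<bar> < pi/2" using Re_Ln_pos_lt_imp \<open>Re w > 0\<close> by blast
  hence "\<zeta> \<in> Sst" by (simp add: Sst_def \<zeta>_def)
  moreover have "exp (2*\<zeta>) = w" using w0 by (simp add: \<zeta>_def)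
  moreover have "(w - 1) / (w + 1) = z" using z1
    by (simp add: w_def field_simps)
  ultimately show ?thesis by (auto simp: Tm_def)
qed



definition Fth :: "real \<Rightarrow> complex \<Rightarrow> complex" where
  "Fth \<theta> z = 1 / (2 * \<i> * complex_of_real (sin \<theta>)) *
           Ln ((1 + z * exp (\<i> * \<theta>)) / (1 + z * exp (- \<i> * \<theta>)))"

definition Fal :: "real \<Rightarrow> complex \<Rightarrow> complex" where
  "Fal \<alpha> z = z * (1 - \<alpha> * z) / (1 - z\<^sup>2)"

lemma eab:
  fixes \<theta> :: real
  shows "exp (\<i> * \<theta>) * exp (- \<i> * \<theta>) = 1" "cmod (exp (\<i> * \<theta>)) = 1" "cmod (exp (- \<i> * \<theta>)) = 1"
    "exp (\<i> * \<theta>) - exp (- \<i> * \<theta>) = 2 * \<i> * sin \<theta>"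
  by (simp_all add: norm_exp) (simp_all add: exp_minus complex_eq_iff Re_exp Im_exp)

lemma den_ne:
  fixes a :: complex assumes "cmod a = 1" "z \<in> \<E>" shows "1 + z * a \<noteq> 0"
proof
  assume "1 + z * a = 0"
  hence "cmod (z * a) = 1" by (metis add.inverse_unique norm_minus_cancel norm_one)
  with assms show False by (simp add: norm_mult unit_disk_def)
qed

lemma q_notin:
  fixes a b z :: complex
  assumes a: "cmod a = 1" and b: "cmod b = 1" and z: "z \<in> \<E>"
  shows "(1 + z * a) / (1 + z * b) \<notin> \<real>\<^sub>\<le>\<^sub>0"
proof
  assume "(1 + z * a) / (1 + z * b) \<in> \<real>\<^sub>\<le>\<^sub>0"
  then obtain r where r: "r \<le> 0" "(1 + z * a) / (1 + z * b) = of_real r"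
    by (auto simp: nonpos_Reals_def)
  have nb: "1 + z * b \<noteq> 0" using den_ne[OF b z] .
  hence e: "1 + z * a = of_real r * (1 + z * b)" using r by (simp add: field_simps)
  hence "z * (a - of_real r * b) = of_real r - 1" by (simp add: algebra_simps)
  hence "cmod z * cmod (a - of_real r * b) = cmod (complex_of_real r - 1)" by (metis norm_mult)
  also have "\<dots> = 1 - r" using r(1)
    by (metis abs_of_nonpos diff_le_0_iff_le dual_order.trans minus_diff_eq norm_of_real of_real_1 of_real_diff zero_less_one_class.zero_le_one)
  finally have "cmod z * cmod (a - of_real r * b) = 1 - r" .
  moreover have "cmod (a - of_real r * b) \<le> 1 - r"
    using norm_triangle_ineq4[of a "of_real r * b"] a b r by (simp add: norm_mult)
  moreover have "cmod z < 1" using z by (simp add: unit_disk_def)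
  ultimately have "1 - r < 1 - r"
  proof -
    assume A: "cmod z * cmod (a - of_real r * b) = 1 - r" "cmod (a - of_real r * b) \<le> 1 - r" "cmod z < 1"
    have "1 - r = cmod z * cmod (a - of_real r * b)" using A by simp
    also have "\<dots> \<le> cmod z * (1 - r)" using A by (intro mult_left_mono) auto
    also have "\<dots> < 1 * (1 - r)" using A r by (intro mult_strict_right_mono) auto
    finally show ?thesis by simp
  qed
  thus False by simp
qed

lemma frac_aux:
  fixes A B C X :: complex
  assumes "A \<noteq> 0" "B \<noteq> 0" "C \<noteq> 0" "X = C"
  shows "1 / C * (inverse (A / B) * (X / (B * B))) = 1 / (A * B)"
  using assms by (simp add: field_simps power2_eq_square)

lemma DERIV_Fth:
  assumes "z \<in> \<E>" "sin \<theta> \<noteq> 0"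
  shows "(Fth \<theta> has_field_derivative 1 / ((1 + z * exp (\<i> * \<theta>)) * (1 + z * exp (- \<i> * \<theta>)))) (at z)"
proof -
  define a where "a = exp (\<i> * complex_of_real \<theta>)"
  define b where "b = exp (- \<i> * complex_of_real \<theta>)"
  have ab: "a * b = 1" "cmod a = 1" "cmod b = 1" "a - b = 2 * \<i> * complex_of_real (sin \<theta>)"
    using eab[of \<theta>] by (simp_all add: a_def b_def)
  have na: "1 + z * a \<noteq> 0" and nb: "1 + z * b \<noteq> 0" using den_ne assms ab by auto
  have q: "(1 + z * a) / (1 + z * b) \<notin> \<real>\<^sub>\<le>\<^sub>0" using q_notin ab assms by auto
  have d1: "((\<lambda>z. 1 + z * a) has_field_derivative a) (at z)"
    by (auto intro!: derivative_eq_intros)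
  have d2: "((\<lambda>z. 1 + z * b) has_field_derivative b) (at z)"
    by (auto intro!: derivative_eq_intros)
  have dq: "((\<lambda>z. (1 + z * a) / (1 + z * b)) has_field_derivative
      ((a * (1 + z * b) - (1 + z * a) * b) / ((1 + z * b) * (1 + z * b)))) (at z)"
    using DERIV_divide[OF d1 d2 nb] .
  have "((\<lambda>z. 1 / (2 * \<i> * complex_of_real (sin \<theta>)) * Ln ((1 + z * a) / (1 + z * b)))
        has_field_derivative
        1 / (2 * \<i> * complex_of_real (sin \<theta>)) *
          (inverse ((1 + z * a) / (1 + z * b)) * ((a * (1 + z * b) - (1 + z * a) * b) / ((1 + z * b) * (1 + z * b))))) (at z)"
    by (rule DERIV_cmult, rule DERIV_chain2[OF has_field_derivative_Ln[OF q] dq])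
  moreover have "1 / (2 * \<i> * complex_of_real (sin \<theta>)) *
          (inverse ((1 + z * a) / (1 + z * b)) * ((a * (1 + z * b) - (1 + z * a) * b) / ((1 + z * b) * (1 + z * b))))
        = 1 / ((1 + z * a) * (1 + z * b))"
  proof -
    have e: "a * (1 + z * b) - (1 + z * a) * b = 2 * \<i> * complex_of_real (sin \<theta>)" using ab(4) by (simp add: algebra_simps)
    have s: "complex_of_real (sin \<theta>) \<noteq> 0" using assms(2) by simp
    have "2 * \<i> * complex_of_real (sin \<theta>) \<noteq> 0" using s by simp
    thus ?thesis using frac_aux[OF na nb _ e] by simp
  qed
  ultimately show ?thesis unfolding Fth_def a_def b_def by (simp add: fun_eq_iff)
qed

lemma Fal_eq_aux:
  fixes z a :: complex
  assumes "1 - z\<^sup>2 \<noteq> 0"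
  shows "((1 - a * z - a * z) * (1 - z\<^sup>2) - z * (1 - a * z) * (- (2 * z))) / ((1 - z\<^sup>2) * (1 - z\<^sup>2))
     = (1 - 2 * a * z + z\<^sup>2) / (1 - z\<^sup>2)\<^sup>2"
proof -
  have "(1 - a * z - a * z) * (1 - z\<^sup>2) - z * (1 - a * z) * (- (2 * z)) = 1 - 2 * a * z + z\<^sup>2"
    by (simp add: power2_eq_square algebra_simps)
  thus ?thesis by (simp add: power2_eq_square)
qed

lemma DERIV_Fal:
  assumes "z\<^sup>2 \<noteq> 1"
  shows "(Fal \<alpha> has_field_derivative (1 - 2 * \<alpha> * z + z\<^sup>2) / (1 - z\<^sup>2)\<^sup>2) (at z)"
proof -
  have n: "1 - z\<^sup>2 \<noteq> 0" using assms by auto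
  have d1: "((\<lambda>z. z * (1 - complex_of_real \<alpha> * z)) has_field_derivative (1 - \<alpha> * z - \<alpha> * z)) (at z)"
    by (auto intro!: derivative_eq_intros simp: algebra_simps)
  have d2: "((\<lambda>z. 1 - z\<^sup>2) has_field_derivative (- (2 * z))) (at z)"
    by (auto intro!: derivative_eq_intros)
  have "((\<lambda>z. z * (1 - complex_of_real \<alpha> * z) / (1 - z\<^sup>2)) has_field_derivative
     ((1 - \<alpha> * z - \<alpha> * z) * (1 - z\<^sup>2) - z * (1 - \<alpha> * z) * (- (2 * z))) / ((1 - z\<^sup>2) * (1 - z\<^sup>2))) (at z)"
    by (rule DERIV_divide[OF d1 d2 n])
  thus ?thesis unfolding Fal_def Fal_eq_aux[OF n] .
qed



definition Fx :: "real \<Rightarrow> real \<Rightarrow> real \<Rightarrow> complex \<Rightarrow> complex" where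
  "Fx t \<theta> \<alpha> z = t * Fth \<theta> z + (1 - t) * Fal \<alpha> z"

definition Fxd :: "real \<Rightarrow> real \<Rightarrow> real \<Rightarrow> complex \<Rightarrow> complex" where
  "Fxd t \<theta> \<alpha> z = t * (1 / ((1 + z * exp (\<i> * \<theta>)) * (1 + z * exp (- \<i> * \<theta>))))
     + (1 - t) * ((1 - 2 * complex_of_real \<alpha> * z + z\<^sup>2) / (1 - z\<^sup>2)\<^sup>2)"

lemma in_E_sq: "z \<in> \<E> \<Longrightarrow> z\<^sup>2 \<noteq> 1"
proof
  assume "z \<in> \<E>" "z\<^sup>2 = 1"
  hence "cmod z < 1" "cmod (z\<^sup>2) = 1" by (auto simp: unit_disk_def)
  moreover from this(1) have "(cmod z)^2 < 1" by (simp add: power_less_one_iff)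
  ultimately show False by (simp add: norm_power)
qed

lemma DERIV_Fx:
  assumes "z \<in> \<E>" "sin \<theta> \<noteq> 0"
  shows "(Fx t \<theta> \<alpha> has_field_derivative Fxd t \<theta> \<alpha> z) (at z)"
  unfolding Fx_def[abs_def] Fxd_def
  by (intro DERIV_add DERIV_cmult DERIV_Fth DERIV_Fal assms in_E_sq)

lemma half_aux: "S = 2 * (W::complex) / D \<Longrightarrow> W * (1 / D) = S / 2"
  by simp

lemma id1:
  fixes a b z :: complex
  assumes "a * b = 1" "1 + z * a \<noteq> 0" "1 + z * b \<noteq> 0"
  shows "(1 - z\<^sup>2) * (1 / ((1 + z * a) * (1 + z * b))) =
      ((1 - z * a) / (1 + z * a) + (1 - z * b) / (1 + z * b)) / 2"
proof -
  have "(1 - z * a) * (1 + z * b) + (1 - z * b) * (1 + z * a) = 2 - 2 * z\<^sup>2 * (a * b)"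
    by (simp add: algebra_simps power2_eq_square)
  hence e: "(1 - z * a) * (1 + z * b) + (1 - z * b) * (1 + z * a) = 2 * (1 - z\<^sup>2)"
    using assms(1) by simp
  have "(1 - z * a) / (1 + z * a) + (1 - z * b) / (1 + z * b)
      = ((1 - z * a) * (1 + z * b) + (1 - z * b) * (1 + z * a)) / ((1 + z * a) * (1 + z * b))"
    using add_frac_eq[OF assms(2,3)] by simp
  also have "\<dots> = 2 * (1 - z\<^sup>2) / ((1 + z * a) * (1 + z * b))" by (simp only: e)
  finally show ?thesis by (rule half_aux)
qed

lemma frac2_aux:
  fixes c d p q :: complex
  assumes "q \<noteq> 0" "p \<noteq> 0"
  shows "c / 2 * (p / q) + d / 2 * (q / p) = (c * p * p + d * q * q) / (2 * (q * p))"
  using assms by (simp add: field_simps)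

lemma id2:
  fixes z :: complex and \<alpha> :: real
  assumes "z\<^sup>2 \<noteq> 1"
  shows "(1 - z\<^sup>2) * ((1 - 2 * complex_of_real \<alpha> * z + z\<^sup>2) / (1 - z\<^sup>2)\<^sup>2) =
     (1 - complex_of_real \<alpha>) / 2 * ((1 - (-z)) / (1 + (-z))) + (1 + complex_of_real \<alpha>) / 2 * ((1 - z) / (1 + z))"
proof -
  have a1: "1 - z \<noteq> 0"
  proof
    assume "1 - z = 0" hence "z = 1" by simp
    with assms show False by simp
  qed
  have a2: "1 + z \<noteq> 0"
  proof
    assume "1 + z = 0" hence "z = -1" by (simp add: add_eq_0_iff)
    with assms show False by simp
  qed
  note a = a1 a2
  define N where "N = 1 - 2 * complex_of_real \<alpha> * z + z\<^sup>2"
  define A where "A = complex_of_real \<alpha>"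
  have e: "1 - z\<^sup>2 = (1 - z) * (1 + z)" by (simp add: power2_eq_square algebra_simps)
  have w: "1 - z\<^sup>2 \<noteq> 0" using a by (simp add: e)
  have s1: "(1 - z\<^sup>2) * (N / (1 - z\<^sup>2)\<^sup>2) = N / (1 - z\<^sup>2)"
    using w by (simp add: power2_eq_square)
  have s2: "(1 - A) / 2 * ((1 + z) / (1 - z)) + (1 + A) / 2 * ((1 - z) / (1 + z))
      = ((1 - A) * (1 + z) * (1 + z) + (1 + A) * (1 - z) * (1 - z)) / (2 * ((1 - z) * (1 + z)))"
    using a by (rule frac2_aux)
  have s3: "(1 - A) * (1 + z) * (1 + z) + (1 + A) * (1 - z) * (1 - z) = 2 * N"
    by (simp add: N_def A_def algebra_simps power2_eq_square)
  have "(1 - z\<^sup>2) * (N / (1 - z\<^sup>2)\<^sup>2) = (1 - A) / 2 * ((1 + z) / (1 - z)) + (1 + A) / 2 * ((1 - z) / (1 + z))"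
  proof -
    have "(1 - z\<^sup>2) * (N / (1 - z\<^sup>2)\<^sup>2) = N / ((1 - z) * (1 + z))" using s1 e by simp
    also have "\<dots> = (2 * N) / (2 * ((1 - z) * (1 + z)))" by simp
    also have "\<dots> = (1 - A) / 2 * ((1 + z) / (1 - z)) + (1 + A) / 2 * ((1 - z) / (1 + z))"
      unfolding s2 s3 ..
    finally show ?thesis .
  qed
  thus ?thesis by (simp add: N_def A_def)
qed

lemma comb_aux0:
  fixes T A X Y U V :: complex
  shows "T * ((X + Y) / 2) + (1 - T) * ((1 - A) / 2 * U + (1 + A) / 2 * V)
   = T / 2 * X + T / 2 * Y + ((1 - T) * (1 - A) / 2) * U + ((1 - T) * (1 + A) / 2) * V"
  by (simp add: field_simps)
lemma comb_aux:
  fixes t \<alpha> :: real and X Y U V :: complex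
  shows "complex_of_real t * ((X + Y) / 2) + (1 - complex_of_real t) * ((1 - complex_of_real \<alpha>) / 2 * U + (1 + complex_of_real \<alpha>) / 2 * V)
   = complex_of_real (t/2) * X + complex_of_real (t/2) * Y
       + complex_of_real ((1-t)*(1-\<alpha>)/2) * U + complex_of_real ((1-t)*(1+\<alpha>)/2) * V"
proof -
  have e1: "complex_of_real (t/2) = complex_of_real t / 2" by simp
  have e2: "complex_of_real ((1-t)*(1-\<alpha>)/2) = (1 - complex_of_real t) * (1 - complex_of_real \<alpha>) / 2" by simp
  have e3: "complex_of_real ((1-t)*(1+\<alpha>)/2) = (1 - complex_of_real t) * (1 + complex_of_real \<alpha>) / 2" by simp
  show ?thesis unfolding e1 e2 e3 by (rule comb_aux0)
qed

lemma Re_ofr_mult: "Re (complex_of_real r * w) = r * Re w" by simp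

lemma Re_pos:
  assumes z: "z \<in> \<E>" and t: "0 \<le> t" "t \<le> 1" and al: "-1 \<le> \<alpha>" "\<alpha> \<le> 1"
  shows "Re ((1 - z\<^sup>2) * Fxd t \<theta> \<alpha> z) > 0"
proof -
  define a where "a = exp (\<i> * complex_of_real \<theta>)"
  define b where "b = exp (- \<i> * complex_of_real \<theta>)"
  have ab: "a * b = 1" "cmod a = 1" "cmod b = 1"
    using eab[of \<theta>] by (simp_all add: a_def b_def)
  have nz: "cmod z < 1" using z by (simp add: unit_disk_def)
  have na: "1 + z * a \<noteq> 0" and nb: "1 + z * b \<noteq> 0" using den_ne z ab by auto
  have P1: "Re ((1 - z * a) / (1 + z * a)) > 0" using Re_quot_pos[of "z*a"] nz ab by (simp add: norm_mult)
  have P2: "Re ((1 - z * b) / (1 + z * b)) > 0" using Re_quot_pos[of "z*b"] nz ab by (simp add: norm_mult)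
  have Q1: "Re ((1 - (-z)) / (1 + (-z))) > 0" using Re_quot_pos[of "-z"] nz by simp
  have Q2: "Re ((1 - z) / (1 + z)) > 0" using Re_quot_pos[of "z"] nz by simp
  define X where "X = (1 - z * a) / (1 + z * a)"
  define Y where "Y = (1 - z * b) / (1 + z * b)"
  define U where "U = (1 - (-z)) / (1 + (-z))"
  define V where "V = (1 - z) / (1 + z)"
  have "(1 - z\<^sup>2) * Fxd t \<theta> \<alpha> z = t * ((1 - z\<^sup>2) * (1 / ((1 + z * a) * (1 + z * b))))
      + (1 - complex_of_real t) * ((1 - z\<^sup>2) * ((1 - 2 * complex_of_real \<alpha> * z + z\<^sup>2) / (1 - z\<^sup>2)\<^sup>2))"
    by (simp add: Fxd_def a_def b_def algebra_simps)
  also have "\<dots> = t * ((X + Y) / 2)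
      + (1 - complex_of_real t) * ((1 - complex_of_real \<alpha>) / 2 * U + (1 + complex_of_real \<alpha>) / 2 * V)"
    unfolding X_def Y_def U_def V_def by (simp only: id1[OF ab(1) na nb] id2[OF in_E_sq[OF z]])
  also have "\<dots> = complex_of_real (t/2) * X + complex_of_real (t/2) * Y
       + complex_of_real ((1-t)*(1-\<alpha>)/2) * U + complex_of_real ((1-t)*(1+\<alpha>)/2) * V"
    by (rule comb_aux)
  finally have eq: "Re ((1 - z\<^sup>2) * Fxd t \<theta> \<alpha> z) =
      t/2 * Re X + t/2 * Re Y + (1-t)*(1-\<alpha>)/2 * Re U + (1-t)*(1+\<alpha>)/2 * Re V"
    by (simp only: plus_complex.sel Re_ofr_mult)
  have P1: "Re X > 0" and P2: "Re Y > 0" and Q1: "Re U > 0" and Q2: "Re V > 0"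
    using P1 P2 Q1 Q2 by (simp_all add: X_def Y_def U_def V_def)
  have A: "t/2 * Re X + t/2 * Re Y \<ge> 0" using P1 P2 t by simp
  have B: "(1-t)*(1-\<alpha>)/2 * Re U \<ge> 0" "(1-t)*(1+\<alpha>)/2 * Re V \<ge> 0" using Q1 Q2 t al by simp_all
  show ?thesis
  proof (cases "t = 1")
    case True
    thus ?thesis using eq P1 P2 by simp
  next
    case False
    hence t1: "1 - t > 0" using t by simp
    show ?thesis
    proof (cases "\<alpha> < 1")
      case True
      hence "(1-t)*(1-\<alpha>)/2 * Re U > 0" using Q1 t1 by simp
      thus ?thesis using eq A B by linarith
    next
      case False
      hence "\<alpha> = 1" using al by simp
      hence "(1-t)*(1+\<alpha>)/2 * Re V > 0" using Q2 t1 by simp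
      thus ?thesis using eq A B by linarith
    qed
  qed
qed

lemma Tm_aux:
  fixes u :: complex assumes n: "u + 1 \<noteq> 0"
  shows "((u * 2) * (u + 1) - (u - 1) * (u * 2)) / ((u + 1) * (u + 1)) = 1 - ((u - 1) / (u + 1))\<^sup>2"
proof -
  have a: "((u - 1) / (u + 1))\<^sup>2 = ((u - 1) * (u - 1)) / ((u + 1) * (u + 1))"
    by (simp add: power2_eq_square)
  have b: "1 = ((u + 1) * (u + 1)) / ((u + 1) * (u + 1))" using n by simp
  have c: "1 - ((u - 1) / (u + 1))\<^sup>2 = ((u + 1) * (u + 1) - (u - 1) * (u - 1)) / ((u + 1) * (u + 1))"
    unfolding a by (subst b) (simp only: diff_divide_distrib)
  also have "(u + 1) * (u + 1) - (u - 1) * (u - 1) = (u * 2) * (u + 1) - (u - 1) * (u * 2)"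
    by (simp add: algebra_simps)
  finally show ?thesis by simp
qed


lemma DERIV_Tm:
  assumes "\<zeta> \<in> Sst"
  shows "(Tm has_field_derivative (1 - (Tm \<zeta>)\<^sup>2)) (at \<zeta>)"
proof -
  define u where "u = exp (2 * \<zeta>)"
  have n: "u + 1 \<noteq> 0" using Tm_in[OF assms] by (simp add: u_def)
  have d1: "((\<lambda>\<zeta>. exp (2 * \<zeta>) - 1) has_field_derivative (exp (2 * \<zeta>) * 2)) (at \<zeta>)"
    by (auto intro!: derivative_eq_intros)
  have d2: "((\<lambda>\<zeta>. exp (2 * \<zeta>) + 1) has_field_derivative (exp (2 * \<zeta>) * 2)) (at \<zeta>)"
    by (auto intro!: derivative_eq_intros)
  have "(Tm has_field_derivative ((exp (2 * \<zeta>) * 2) * (exp (2 * \<zeta>) + 1) - (exp (2 * \<zeta>) - 1) * (exp (2 * \<zeta>) * 2)) / ((exp (2 * \<zeta>) + 1) * (exp (2 * \<zeta>) + 1))) (at \<zeta>)"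
    unfolding Tm_def[abs_def] by (rule DERIV_divide[OF d1 d2]) (use n in \<open>simp add: u_def\<close>)
  moreover have "((exp (2 * \<zeta>) * 2) * (exp (2 * \<zeta>) + 1) - (exp (2 * \<zeta>) - 1) * (exp (2 * \<zeta>) * 2)) / ((exp (2 * \<zeta>) + 1) * (exp (2 * \<zeta>) + 1))
     = 1 - (Tm \<zeta>)\<^sup>2"
    unfolding Tm_def u_def[symmetric] using n by (rule Tm_aux)
  ultimately show ?thesis by simp
qed



definition Gf :: "real \<Rightarrow> real \<Rightarrow> real \<Rightarrow> complex \<Rightarrow> complex" where
  "Gf t \<theta> \<alpha> \<zeta> = Fx t \<theta> \<alpha> (Tm \<zeta>)"

lemma DERIV_Gf:
  assumes "\<zeta> \<in> Sst" "sin \<theta> \<noteq> 0"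
  shows "(Gf t \<theta> \<alpha> has_field_derivative Fxd t \<theta> \<alpha> (Tm \<zeta>) * (1 - (Tm \<zeta>)\<^sup>2)) (at \<zeta>)"
  unfolding Gf_def[abs_def]
  by (rule DERIV_chain2[OF DERIV_Fx[OF Tm_in(1)[OF assms(1)] assms(2)] DERIV_Tm[OF assms(1)]])

lemma Re_Gd_pos:
  assumes "\<zeta> \<in> Sst" "0 \<le> t" "t \<le> 1" "-1 \<le> \<alpha>" "\<alpha> \<le> 1"
  shows "Re (Fxd t \<theta> \<alpha> (Tm \<zeta>) * (1 - (Tm \<zeta>)\<^sup>2)) > 0"
  using Re_pos[OF Tm_in(1)[OF assms(1)] assms(2-5), of \<theta>] by (simp add: mult.commute)

lemma Sst_seg:
  assumes "\<zeta>1 \<in> Sst" "\<zeta>2 \<in> Sst" "0 \<le> \<tau>" "\<tau> \<le> 1"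
  shows "\<zeta>1 + complex_of_real \<tau> * (\<zeta>2 - \<zeta>1) \<in> Sst"
proof -
  have "Im (\<zeta>1 + complex_of_real \<tau> * (\<zeta>2 - \<zeta>1)) = (1 - \<tau>) * Im \<zeta>1 + \<tau> * Im \<zeta>2"
    by (simp add: algebra_simps)
  moreover have "\<bar>(1 - \<tau>) * Im \<zeta>1 + \<tau> * Im \<zeta>2\<bar> < pi/4"
  proof -
    have a: "\<bar>Im \<zeta>1\<bar> < pi/4" "\<bar>Im \<zeta>2\<bar> < pi/4" using assms by (auto simp: Sst_def)
    have "\<bar>(1 - \<tau>) * Im \<zeta>1 + \<tau> * Im \<zeta>2\<bar> \<le> (1 - \<tau>) * \<bar>Im \<zeta>1\<bar> + \<tau> * \<bar>Im \<zeta>2\<bar>"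
      using assms(3,4) by (metis abs_mult abs_of_nonneg abs_triangle_ineq diff_ge_0_iff_ge)
    also have "\<dots> < (1 - \<tau>) * (pi/4) + \<tau> * (pi/4)"
    proof (cases "\<tau> = 0")
      case True thus ?thesis using a by simp
    next
      case False
      hence "\<tau> * \<bar>Im \<zeta>2\<bar> < \<tau> * (pi/4)" using a assms by simp
      moreover have "(1 - \<tau>) * \<bar>Im \<zeta>1\<bar> \<le> (1 - \<tau>) * (pi/4)" using a assms by (intro mult_left_mono) auto
      ultimately show ?thesis by linarith
    qed
    also have "\<dots> = pi/4" by (simp only: distrib_right[symmetric]) simp
    finally show ?thesis .
  qed
  ultimately show ?thesis by (simp add: Sst_def)
qed

lemma Gf_inj:
  assumes "sin \<theta> \<noteq> 0" "0 \<le> t" "t \<le> 1" "-1 \<le> \<alpha>" "\<alpha> \<le> 1"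
  shows "inj_on (Gf t \<theta> \<alpha>) Sst"
proof (rule inj_onI, rule ccontr)
  fix \<zeta>1 \<zeta>2 assume z: "\<zeta>1 \<in> Sst" "\<zeta>2 \<in> Sst" "Gf t \<theta> \<alpha> \<zeta>1 = Gf t \<theta> \<alpha> \<zeta>2" "\<zeta>1 \<noteq> \<zeta>2"
  define d where "d = \<zeta>2 - \<zeta>1"
  have d0: "d \<noteq> 0" using z by (simp add: d_def)
  define \<psi> where "\<psi> = (\<lambda>\<tau>. Re (Gf t \<theta> \<alpha> (\<zeta>1 + complex_of_real \<tau> * d) / d))"
  have der: "\<exists>y. DERIV \<psi> \<tau> :> y \<and> y > 0" if "0 \<le> \<tau>" "\<tau> \<le> 1" for \<tau>
  proof -
    define w where "w = \<zeta>1 + complex_of_real \<tau> * d"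
    have wS: "w \<in> Sst" using Sst_seg[OF z(1,2) that] by (simp add: w_def d_def)
    have dp: "((\<lambda>\<tau>. \<zeta>1 + complex_of_real \<tau> * d) has_vector_derivative d) (at \<tau>)"
      by (auto intro!: derivative_eq_intros)
    have dG: "((\<lambda>\<zeta>. Gf t \<theta> \<alpha> \<zeta> / d) has_field_derivative (Fxd t \<theta> \<alpha> (Tm w) * (1 - (Tm w)\<^sup>2)) / d) (at w)"
      by (rule DERIV_cdivide[OF DERIV_Gf[OF wS assms(1)]])
    have "(((\<lambda>\<zeta>. Gf t \<theta> \<alpha> \<zeta> / d) \<circ> (\<lambda>\<tau>. \<zeta>1 + complex_of_real \<tau> * d)) has_vector_derivative
        d * ((Fxd t \<theta> \<alpha> (Tm w) * (1 - (Tm w)\<^sup>2)) / d)) (at \<tau>)"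
      using field_vector_diff_chain_at[OF dp dG[unfolded w_def]] unfolding w_def .
    hence "DERIV \<psi> \<tau> :> Re (d * ((Fxd t \<theta> \<alpha> (Tm w) * (1 - (Tm w)\<^sup>2)) / d))"
      unfolding \<psi>_def using has_field_derivative_Re by (force simp: o_def)
    moreover have "d * ((Fxd t \<theta> \<alpha> (Tm w) * (1 - (Tm w)\<^sup>2)) / d) = Fxd t \<theta> \<alpha> (Tm w) * (1 - (Tm w)\<^sup>2)"
      using d0 by simp
    ultimately show ?thesis using Re_Gd_pos[OF wS assms(2-5)] by auto
  qed
  have "\<psi> 0 < \<psi> 1" by (rule DERIV_pos_imp_increasing[of 0 1]) (use der in auto)
  moreover have "\<psi> 0 = \<psi> 1" using z(3) by (simp add: \<psi>_def d_def)
  ultimately show False by simp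
qed

lemma Fx_inj:
  assumes "sin \<theta> \<noteq> 0" "0 \<le> t" "t \<le> 1" "-1 \<le> \<alpha>" "\<alpha> \<le> 1"
  shows "inj_on (Fx t \<theta> \<alpha>) \<E>"
proof (rule inj_onI)
  fix z1 z2 assume z: "z1 \<in> \<E>" "z2 \<in> \<E>" "Fx t \<theta> \<alpha> z1 = Fx t \<theta> \<alpha> z2"
  obtain \<zeta>1 where 1: "\<zeta>1 \<in> Sst" "Tm \<zeta>1 = z1" using Tm_surj z(1) by blast
  obtain \<zeta>2 where 2: "\<zeta>2 \<in> Sst" "Tm \<zeta>2 = z2" using Tm_surj z(2) by blast
  have "Gf t \<theta> \<alpha> \<zeta>1 = Gf t \<theta> \<alpha> \<zeta>2" using z 1 2 by (simp add: Gf_def)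
  hence "\<zeta>1 = \<zeta>2" using Gf_inj[OF assms] 1 2 by (auto dest: inj_onD)
  thus "z1 = z2" using 1 2 by simp
qed

lemma Gf_mono:
  assumes "sin \<theta> \<noteq> 0" "0 \<le> t" "t \<le> 1" "-1 \<le> \<alpha>" "\<alpha> \<le> 1" "\<bar>s\<bar> < pi/4" "x1 < x2"
  shows "Re (Gf t \<theta> \<alpha> (complex_of_real x1 + \<i> * complex_of_real s)) < Re (Gf t \<theta> \<alpha> (complex_of_real x2 + \<i> * complex_of_real s))"
proof -
  define \<psi> where "\<psi> = (\<lambda>x. Re (Gf t \<theta> \<alpha> (complex_of_real x + \<i> * complex_of_real s)))"
  have der: "\<exists>y. DERIV \<psi> x :> y \<and> y > 0" for x
  proof -
    define w where "w = complex_of_real x + \<i> * complex_of_real s"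
    have wS: "w \<in> Sst" using assms(6) by (simp add: w_def Sst_def)
    have dp: "((\<lambda>x. complex_of_real x + \<i> * complex_of_real s) has_vector_derivative 1) (at x)"
      by (auto intro!: derivative_eq_intros)
    have "((Gf t \<theta> \<alpha> \<circ> (\<lambda>x. complex_of_real x + \<i> * complex_of_real s)) has_vector_derivative
        1 * (Fxd t \<theta> \<alpha> (Tm w) * (1 - (Tm w)\<^sup>2))) (at x)"
      using field_vector_diff_chain_at[OF dp DERIV_Gf[OF wS assms(1), unfolded w_def]] unfolding w_def .
    hence "DERIV \<psi> x :> Re (1 * (Fxd t \<theta> \<alpha> (Tm w) * (1 - (Tm w)\<^sup>2)))"
      unfolding \<psi>_def using has_field_derivative_Re by (force simp: o_def)
    thus ?thesis using Re_Gd_pos[OF wS assms(2-5)] by auto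
  qed
  show ?thesis using DERIV_pos_imp_increasing[OF assms(7)] der unfolding \<psi>_def by blast
qed



lemma Fal_u:
  fixes u :: complex and \<alpha> :: real
  assumes "u \<noteq> 0" "u + 1 \<noteq> 0"
  shows "Fal \<alpha> ((u - 1) / (u + 1)) = (1 - complex_of_real \<alpha>) / 4 * (u - 1) + (1 + complex_of_real \<alpha>) / 4 * (1 - 1 / u)"
proof -
  define A where "A = complex_of_real \<alpha>"
  have d: "1 - ((u - 1) / (u + 1))\<^sup>2 = 4 * u / ((u + 1) * (u + 1))"
  proof -
    have "1 - ((u - 1) / (u + 1))\<^sup>2 = ((u * 2) * (u + 1) - (u - 1) * (u * 2)) / ((u + 1) * (u + 1))"
      using Tm_aux[OF assms(2)] by simp
    also have "(u * 2) * (u + 1) - (u - 1) * (u * 2) = 4 * u" by (simp add: algebra_simps)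
    finally show ?thesis .
  qed
  have n: "(u - 1) / (u + 1) * (1 - A * ((u - 1) / (u + 1))) = (u - 1) * ((u + 1) - A * (u - 1)) / ((u + 1) * (u + 1))"
    using assms(2) by (simp add: field_simps)
  have "Fal \<alpha> ((u - 1) / (u + 1)) = ((u - 1) * ((u + 1) - A * (u - 1)) / ((u + 1) * (u + 1))) / (4 * u / ((u + 1) * (u + 1)))"
    unfolding Fal_def A_def[symmetric] d[symmetric] n ..
  also have "\<dots> = (u - 1) * ((u + 1) - A * (u - 1)) / (4 * u)"
    using assms by (simp add: divide_simps)
  also have "\<dots> = (1 - A) / 4 * (u - 1) + (1 + A) / 4 * (1 - 1 / u)"
    using assms by (simp add: field_simps)
  finally show ?thesis by (simp add: A_def)
qed


definition RG :: "real \<Rightarrow> real \<Rightarrow> real \<Rightarrow> real \<Rightarrow> real \<Rightarrow> real" where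
  "RG t \<theta> \<alpha> x s = Re (Gf t \<theta> \<alpha> (complex_of_real x + \<i> * complex_of_real s))"

definition RF :: "real \<Rightarrow> real \<Rightarrow> real \<Rightarrow> real" where
  "RF \<theta> x s = Re (Fth \<theta> (Tm (complex_of_real x + \<i> * complex_of_real s)))"

lemma RG_eq:
  assumes "\<bar>s\<bar> < pi/4"
  shows "RG t \<theta> \<alpha> x s = t * RF \<theta> x s + (1 - t) * ((1 - \<alpha>) / 4 * (exp (2 * x) * cos (2 * s) - 1)
            + (1 + \<alpha>) / 4 * (1 - exp (-2 * x) * cos (2 * s)))"
proof -
  define \<zeta> where "\<zeta> = complex_of_real x + \<i> * complex_of_real s"
  have S: "\<zeta> \<in> Sst" using assms by (simp add: Sst_def \<zeta>_def)
  define u where "u = exp (2 * \<zeta>)"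
  have u0: "u \<noteq> 0" by (simp add: u_def)
  have u1: "u + 1 \<noteq> 0" using Tm_in(2)[OF S] by (simp add: u_def)
  have T: "Tm \<zeta> = (u - 1) / (u + 1)" by (simp add: Tm_def u_def)
  have iu: "1 / u = exp (-2 * \<zeta>)" by (simp add: u_def exp_minus divide_inverse)
  have Reu: "Re u = exp (2 * x) * cos (2 * s)" by (simp add: u_def \<zeta>_def Re_exp)
  have Reiu: "Re (exp (-2 * \<zeta>)) = exp (-2 * x) * cos (2 * s)" by (simp add: \<zeta>_def Re_exp)
  have "Gf t \<theta> \<alpha> \<zeta> = t * Fth \<theta> (Tm \<zeta>) + (1 - t) * ((1 - complex_of_real \<alpha>) / 4 * (u - 1) + (1 + complex_of_real \<alpha>) / 4 * (1 - exp (-2 * \<zeta>)))"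
    unfolding Gf_def Fx_def using Fal_u[OF u0 u1, of \<alpha>] T iu by simp
  hence "Re (Gf t \<theta> \<alpha> \<zeta>) = t * Re (Fth \<theta> (Tm \<zeta>)) + (1 - t) * ((1 - \<alpha>) / 4 * (Re u - 1) + (1 + \<alpha>) / 4 * (1 - Re (exp (-2 * \<zeta>))))"
    by simp
  thus ?thesis unfolding RG_def RF_def \<zeta>_def[symmetric] Reu Reiu .
qed

lemma Tm_top: "((\<lambda>x. Tm (complex_of_real x + \<i> * complex_of_real s)) \<longlongrightarrow> 1) at_top"
proof -
  have ev: "eventually (\<lambda>x. norm (Tm (complex_of_real x + \<i> * complex_of_real s) - 1) \<le> 2 / (exp (2 * x) - 1)) at_top"
  proof (rule eventually_at_top_linorderI[of 1])
    fix x :: real assume x: "1 \<le> x"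
    define u where "u = exp (2 * (complex_of_real x + \<i> * complex_of_real s))"
    have nu: "norm u = exp (2 * x)" by (simp add: u_def norm_exp)
    have e1: "exp (2 * x) > 1" using x by simp
    have "norm u - 1 \<le> norm (u + 1)" using norm_triangle_ineq2[of u "-1"] by simp
    hence nu1: "exp (2 * x) - 1 \<le> norm (u + 1)" using nu by simp
    hence u1: "u + 1 \<noteq> 0" using e1 by auto
    have "Tm (complex_of_real x + \<i> * complex_of_real s) - 1 = - 2 / (u + 1)"
      unfolding Tm_def u_def[symmetric] using u1 by (simp add: field_simps)
    hence "norm (Tm (complex_of_real x + \<i> * complex_of_real s) - 1) = 2 / norm (u + 1)"
      by (simp add: norm_divide)
    also have "\<dots> \<le> 2 / (exp (2 * x) - 1)" using nu1 e1 by (intro divide_left_mono) (auto intro!: mult_pos_pos)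
    finally show "norm (Tm (complex_of_real x + \<i> * complex_of_real s) - 1) \<le> 2 / (exp (2 * x) - 1)" .
  qed
  have "((\<lambda>x::real. 2 / (exp (2 * x) - 1)) \<longlongrightarrow> 0) at_top" by real_asymp
  hence "((\<lambda>x. Tm (complex_of_real x + \<i> * complex_of_real s) - 1) \<longlongrightarrow> 0) at_top"
    using Lim_null_comparison[OF ev] by blast
  thus ?thesis using Lim_null tendsto_iff by (simp add: LIM_zero_iff)
qed

lemma Tm_bot: "((\<lambda>x. Tm (complex_of_real x + \<i> * complex_of_real s)) \<longlongrightarrow> -1) at_bot"
proof -
  have ev: "eventually (\<lambda>x. norm (Tm (complex_of_real x + \<i> * complex_of_real s) - (-1)) \<le> 2 * exp (2 * x) / (1 - exp (2 * x))) at_bot"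
  proof (rule eventually_at_bot_linorderI[of "-1"])
    fix x :: real assume x: "x \<le> -1"
    define u where "u = exp (2 * (complex_of_real x + \<i> * complex_of_real s))"
    have nu: "norm u = exp (2 * x)" by (simp add: u_def norm_exp)
    have e1: "exp (2 * x) < 1" using x by simp
    have "1 - norm u \<le> norm (u + 1)" using norm_triangle_ineq2[of 1 "-u"] by (simp add: add.commute)
    hence nu1: "1 - exp (2 * x) \<le> norm (u + 1)" using nu by simp
    hence u1: "u + 1 \<noteq> 0" using e1 by auto
    have "Tm (complex_of_real x + \<i> * complex_of_real s) - (-1) = 2 * u / (u + 1)"
      unfolding Tm_def u_def[symmetric] using u1 by (simp add: field_simps)
    hence "norm (Tm (complex_of_real x + \<i> * complex_of_real s) - (-1)) = 2 * exp (2 * x) / norm (u + 1)"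
      by (simp add: norm_divide norm_mult nu)
    also have "\<dots> \<le> 2 * exp (2 * x) / (1 - exp (2 * x))" using nu1 e1 by (intro divide_left_mono) (auto intro!: mult_pos_pos)
    finally show "norm (Tm (complex_of_real x + \<i> * complex_of_real s) - (-1)) \<le> 2 * exp (2 * x) / (1 - exp (2 * x))" .
  qed
  have "((\<lambda>x::real. 2 * exp (2 * x) / (1 - exp (2 * x))) \<longlongrightarrow> 0) at_bot" by real_asymp
  hence "((\<lambda>x. Tm (complex_of_real x + \<i> * complex_of_real s) - (-1)) \<longlongrightarrow> 0) at_bot"
    using Lim_null_comparison[OF ev] by blast
  thus ?thesis using LIM_zero_iff[of "\<lambda>x. Tm (complex_of_real x + \<i> * complex_of_real s)" "-1"] by simp
qed

lemma Fth_cont: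
  assumes "0 < \<theta>" "\<theta> < pi"
  shows "isCont (Fth \<theta>) 1" "isCont (Fth \<theta>) (-1)"
proof -
  define a where "a = exp (\<i> * complex_of_real \<theta>)"
  define b where "b = exp (- \<i> * complex_of_real \<theta>)"
  have ab: "a * b = 1" using eab[of \<theta>] by (simp add: a_def b_def)
  have sp: "sin \<theta> > 0" using assms by (simp add: sin_gt_zero)
  have Ima: "Im a = sin \<theta>" by (simp add: a_def Im_exp)
  have Imb: "Im b = - sin \<theta>" by (simp add: b_def Im_exp)
  have b1: "1 + b \<noteq> 0" "1 - b \<noteq> 0" using Imb sp by (auto simp: complex_eq_iff)
  have q1: "(1 + 1 * a) / (1 + 1 * b) = a" using b1 ab by (simp add: field_simps)
  have q2: "(1 + (-1) * a) / (1 + (-1) * b) = -a" using b1 ab by (simp add: field_simps)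
  have na: "a \<notin> \<real>\<^sub>\<le>\<^sub>0" "-a \<notin> \<real>\<^sub>\<le>\<^sub>0" using Ima sp by (auto simp: complex_nonpos_Reals_iff)
  have F: "Fth \<theta> = (\<lambda>z. 1 / (2 * \<i> * complex_of_real (sin \<theta>)) * Ln ((1 + z * a) / (1 + z * b)))"
    by (simp add: fun_eq_iff Fth_def a_def b_def)
  show "isCont (Fth \<theta>) 1" unfolding F
    by (intro continuous_intros) (use b1 q1 na in auto)
  show "isCont (Fth \<theta>) (-1)" unfolding F
    by (intro continuous_intros) (use b1 q2 na in auto)
qed

lemma RF_top:
  assumes "0 < \<theta>" "\<theta> < pi"
  shows "((\<lambda>x. RF \<theta> x s) \<longlongrightarrow> Re (Fth \<theta> 1)) at_top"
  unfolding RF_def by (intro tendsto_Re isCont_tendsto_compose[OF Fth_cont(1)[OF assms] Tm_top])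

lemma RF_bot:
  assumes "0 < \<theta>" "\<theta> < pi"
  shows "((\<lambda>x. RF \<theta> x s) \<longlongrightarrow> Re (Fth \<theta> (-1))) at_bot"
  unfolding RF_def by (intro tendsto_Re isCont_tendsto_compose[OF Fth_cont(2)[OF assms] Tm_bot])



locale prm =
  fixes t \<theta> \<alpha> :: real
  assumes th: "0 < \<theta>" "\<theta> < pi" and tt: "0 \<le> t" "t \<le> 1" and al: "-1 \<le> \<alpha>" "\<alpha> \<le> 1"
begin

lemma sin_ne: "sin \<theta> \<noteq> 0" using th sin_gt_zero by fastforce

lemma mono_strict: "\<bar>s\<bar> < pi/4 \<Longrightarrow> x1 < x2 \<Longrightarrow> RG t \<theta> \<alpha> x1 s < RG t \<theta> \<alpha> x2 s"
  unfolding RG_def by (rule Gf_mono[OF sin_ne tt al])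

lemma mono_le: "\<bar>s\<bar> < pi/4 \<Longrightarrow> x1 \<le> x2 \<Longrightarrow> RG t \<theta> \<alpha> x1 s \<le> RG t \<theta> \<alpha> x2 s"
  using mono_strict by (cases "x1 = x2") (auto intro: less_imp_le)

lemma cos_pos: "\<bar>s\<bar> < pi/4 \<Longrightarrow> cos (2 * s) > 0"
  by (intro cos_gt_zero_pi) auto

lemma exceed:
  assumes s1: "\<bar>s1\<bar> < pi/4" and s2: "\<bar>s2\<bar> < pi/4"
  shows "\<exists>x2. RG t \<theta> \<alpha> x2 s2 > RG t \<theta> \<alpha> x1 s1"
proof -
  define P where "P = (1 - t) * (1 - \<alpha>) / 4"
  define C where "C = (\<lambda>x s. t * RF \<theta> x s + (1 - t) * ((1 + \<alpha>) / 4 * (1 - exp (-2 * x) * cos (2 * s))) - P)"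
  define L where "L = t * Re (Fth \<theta> 1) + (1 - t) * ((1 + \<alpha>) / 4 * (1 - 0 * cos (2 * s2))) - P"
  define L1 where "L1 = t * Re (Fth \<theta> 1) + (1 - t) * ((1 + \<alpha>) / 4 * (1 - 0 * cos (2 * s1))) - P"
  have LL: "L1 = L" by (simp add: L_def L1_def)
  have RGC: "RG t \<theta> \<alpha> x s = C x s + P * exp (2 * x) * cos (2 * s)" if "\<bar>s\<bar> < pi/4" for x s
    using RG_eq[OF that, of t \<theta> \<alpha> x] by (simp add: C_def P_def algebra_simps)
  have e0: "((\<lambda>x::real. exp (-2 * x)) \<longlongrightarrow> 0) at_top" by real_asymp
  have Clim: "((\<lambda>x. C x s) \<longlongrightarrow> t * Re (Fth \<theta> 1) + (1 - t) * ((1 + \<alpha>) / 4 * (1 - 0 * cos (2 * s))) - P) at_top" for s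
    unfolding C_def by (intro tendsto_intros RF_top[OF th] e0)
  define v where "v = RG t \<theta> \<alpha> x1 s1"
  have P0: "P \<ge> 0" using tt al by (simp add: P_def)
  have ev: "eventually (\<lambda>x. RG t \<theta> \<alpha> x s2 > v) at_top"
  proof (cases "P = 0")
    case True
    have lim: "((\<lambda>x. RG t \<theta> \<alpha> x s) \<longlongrightarrow> t * Re (Fth \<theta> 1) + (1 - t) * ((1 + \<alpha>) / 4 * (1 - 0 * cos (2 * s))) - P) at_top"
      if "\<bar>s\<bar> < pi/4" for s
      using Clim[of s] RGC[OF that] True by simp
    have "v < RG t \<theta> \<alpha> (x1 + 1) s1" unfolding v_def by (rule mono_strict[OF s1]) simp
    also have "\<dots> \<le> L1" unfolding L1_def
      by (rule tendsto_lowerbound[OF lim[OF s1]])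
         (auto simp: eventually_at_top_linorder intro!: exI[of _ "x1 + 1"] mono_le[OF s1])
    finally have "v < L" using LL by simp
    thus ?thesis using order_tendstoD(1)[OF lim[OF s2]] unfolding L_def by blast
  next
    case False
    hence Pp: "P > 0" using P0 by simp
    have cp: "P * cos (2 * s2) > 0" using Pp cos_pos[OF s2] by simp
    have "filterlim (\<lambda>x::real. exp (2 * x)) at_top at_top" by real_asymp
    hence "filterlim (\<lambda>x. P * cos (2 * s2) * exp (2 * x)) at_top at_top"
      by (rule filterlim_tendsto_pos_mult_at_top[OF tendsto_const cp])
    hence e1: "eventually (\<lambda>x. P * cos (2 * s2) * exp (2 * x) \<ge> v - L + 1) at_top"
      by (simp add: filterlim_at_top)
    have e2: "eventually (\<lambda>x. C x s2 > L - 1) at_top"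
      using order_tendstoD(1)[OF Clim[of s2], of "L - 1"] unfolding L_def by simp
    show ?thesis using e1 e2
    proof eventually_elim
      case (elim x)
      thus ?case using RGC[OF s2, of x] by (simp add: algebra_simps)
    qed
  qed
  then obtain N where "\<forall>x\<ge>N. RG t \<theta> \<alpha> x s2 > v" by (auto simp: eventually_at_top_linorder)
  thus ?thesis unfolding v_def by auto
qed

lemma below:
  assumes s1: "\<bar>s1\<bar> < pi/4" and s2: "\<bar>s2\<bar> < pi/4"
  shows "\<exists>x2. RG t \<theta> \<alpha> x2 s2 < RG t \<theta> \<alpha> x1 s1"
proof -
  define Q where "Q = (1 - t) * (1 + \<alpha>) / 4"
  define D where "D = (\<lambda>x s. t * RF \<theta> x s + (1 - t) * ((1 - \<alpha>) / 4 * (exp (2 * x) * cos (2 * s) - 1)) + Q)"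
  define L where "L = t * Re (Fth \<theta> (-1)) + (1 - t) * ((1 - \<alpha>) / 4 * (0 * cos (2 * s2) - 1)) + Q"
  define L1 where "L1 = t * Re (Fth \<theta> (-1)) + (1 - t) * ((1 - \<alpha>) / 4 * (0 * cos (2 * s1) - 1)) + Q"
  have LL: "L1 = L" by (simp add: L_def L1_def)
  have RGD: "RG t \<theta> \<alpha> x s = D x s - Q * exp (-2 * x) * cos (2 * s)" if "\<bar>s\<bar> < pi/4" for x s
    using RG_eq[OF that, of t \<theta> \<alpha> x] by (simp add: D_def Q_def algebra_simps)
  have e0: "((\<lambda>x::real. exp (2 * x)) \<longlongrightarrow> 0) at_bot" by real_asymp
  have Dlim: "((\<lambda>x. D x s) \<longlongrightarrow> t * Re (Fth \<theta> (-1)) + (1 - t) * ((1 - \<alpha>) / 4 * (0 * cos (2 * s) - 1)) + Q) at_bot" for s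
    unfolding D_def by (intro tendsto_intros RF_bot[OF th] e0)
  define v where "v = RG t \<theta> \<alpha> x1 s1"
  have Q0: "Q \<ge> 0" using tt al by (simp add: Q_def)
  have ev: "eventually (\<lambda>x. RG t \<theta> \<alpha> x s2 < v) at_bot"
  proof (cases "Q = 0")
    case True
    have lim: "((\<lambda>x. RG t \<theta> \<alpha> x s) \<longlongrightarrow> t * Re (Fth \<theta> (-1)) + (1 - t) * ((1 - \<alpha>) / 4 * (0 * cos (2 * s) - 1)) + Q) at_bot"
      if "\<bar>s\<bar> < pi/4" for s
      using Dlim[of s] RGD[OF that] True by simp
    have "L1 \<le> RG t \<theta> \<alpha> (x1 - 1) s1" unfolding L1_def
      by (rule tendsto_upperbound[OF lim[OF s1]])
         (auto simp: eventually_at_bot_linorder intro!: exI[of _ "x1 - 1"] mono_le[OF s1])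
    also have "\<dots> < v" unfolding v_def by (rule mono_strict[OF s1]) simp
    finally have "L < v" using LL by simp
    thus ?thesis using order_tendstoD(2)[OF lim[OF s2]] unfolding L_def by blast
  next
    case False
    hence Qp: "Q > 0" using Q0 by simp
    have cp: "Q * cos (2 * s2) > 0" using Qp cos_pos[OF s2] by simp
    have "filterlim (\<lambda>x::real. exp (-2 * x)) at_top at_bot" by real_asymp
    hence "filterlim (\<lambda>x. Q * cos (2 * s2) * exp (-2 * x)) at_top at_bot"
      by (rule filterlim_tendsto_pos_mult_at_top[OF tendsto_const cp])
    hence e1: "eventually (\<lambda>x. Q * cos (2 * s2) * exp (-2 * x) \<ge> L + 1 - v) at_bot"
      by (simp add: filterlim_at_top)
    have e2: "eventually (\<lambda>x. D x s2 < L + 1) at_bot"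
      using order_tendstoD(2)[OF Dlim[of s2], of "L + 1"] unfolding L_def by simp
    show ?thesis using e1 e2
    proof eventually_elim
      case (elim x)
      thus ?case using RGD[OF s2, of x] by (simp add: algebra_simps)
    qed
  qed
  then obtain N where "\<forall>x\<le>N. RG t \<theta> \<alpha> x s2 < v" by (auto simp: eventually_at_bot_linorder)
  thus ?thesis unfolding v_def by auto
qed

end



context prm begin

lemma Gf_isCont: "\<zeta> \<in> Sst \<Longrightarrow> isCont (Gf t \<theta> \<alpha>) \<zeta>"
  using DERIV_isCont[OF DERIV_Gf[OF _ sin_ne]] by blast

lemma RG_cont_x: assumes "\<bar>s\<bar> < pi/4" shows "isCont (\<lambda>x. RG t \<theta> \<alpha> x s) x0"
proof -
  have p: "isCont (\<lambda>x. complex_of_real x + \<i> * complex_of_real s) x0" by (intro continuous_intros)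
  have "isCont (Gf t \<theta> \<alpha>) (complex_of_real x0 + \<i> * complex_of_real s)"
    using assms by (intro Gf_isCont) (simp add: Sst_def)
  hence "isCont (\<lambda>x. Gf t \<theta> \<alpha> (complex_of_real x + \<i> * complex_of_real s)) x0"
    using isCont_o2[OF p] by blast
  thus ?thesis unfolding RG_def by (rule continuous_Re)
qed

lemma RG_cont_s: assumes "\<bar>s0\<bar> < pi/4" shows "isCont (\<lambda>s. RG t \<theta> \<alpha> x s) s0"
proof -
  have p: "isCont (\<lambda>s. complex_of_real x + \<i> * complex_of_real s) s0" by (intro continuous_intros)
  have "isCont (Gf t \<theta> \<alpha>) (complex_of_real x + \<i> * complex_of_real s0)"
    using assms by (intro Gf_isCont) (simp add: Sst_def)
  hence "isCont (\<lambda>s. Gf t \<theta> \<alpha> (complex_of_real x + \<i> * complex_of_real s)) s0"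
    using isCont_o2[OF p] by blast
  thus ?thesis unfolding RG_def by (rule continuous_Re)
qed

lemma level_connected: "connected (Fx t \<theta> \<alpha> ` \<E> \<inter> {w. Re w = c})"
proof (cases "Fx t \<theta> \<alpha> ` \<E> \<inter> {w. Re w = c} = {}")
  case True thus ?thesis by simp
next
  case False
  then obtain z0 where z0: "z0 \<in> \<E>" "Re (Fx t \<theta> \<alpha> z0) = c" by auto
  obtain \<zeta>0 where \<zeta>0: "\<zeta>0 \<in> Sst" "Tm \<zeta>0 = z0" using Tm_surj[OF z0(1)] by blast
  define x0 where "x0 = Re \<zeta>0"
  define s0 where "s0 = Im \<zeta>0"
  have s0I: "\<bar>s0\<bar> < pi/4" using \<zeta>0 by (simp add: s0_def Sst_def)
  have eq0: "complex_of_real x0 + \<i> * complex_of_real s0 = \<zeta>0" by (simp add: x0_def s0_def complex_eq_iff)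
  have c0: "RG t \<theta> \<alpha> x0 s0 = c" using z0 \<zeta>0 eq0 by (simp add: RG_def Gf_def)
  define I where "I = {-(pi/4)<..<pi/4}"
  have inI: "s \<in> I \<longleftrightarrow> \<bar>s\<bar> < pi/4" for s by (auto simp: I_def)
  have ex1: "\<exists>!x. RG t \<theta> \<alpha> x s = c" if sI: "\<bar>s\<bar> < pi/4" for s
  proof -
    obtain xb where xb: "RG t \<theta> \<alpha> xb s > c" using exceed[OF s0I sI] c0 by auto
    obtain xa where xa: "RG t \<theta> \<alpha> xa s < c" using below[OF s0I sI] c0 by auto
    have ab: "xa \<le> xb" using mono_le[OF sI, of xb xa] xa xb by (cases "xa \<le> xb") auto
    have "continuous_on {xa..xb} (\<lambda>x. RG t \<theta> \<alpha> x s)"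
      by (intro continuous_at_imp_continuous_on ballI RG_cont_x[OF sI])
    then obtain x where "RG t \<theta> \<alpha> x s = c"
      using IVT'[of "\<lambda>x. RG t \<theta> \<alpha> x s" xa c xb] xa xb ab by auto
    moreover have "y = x" if "RG t \<theta> \<alpha> y s = c" "RG t \<theta> \<alpha> x s = c" for x y
      using mono_strict[OF sI, of x y] mono_strict[OF sI, of y x] that by (cases "x < y"; cases "y < x") auto
    ultimately show ?thesis by blast
  qed
  define \<xi> where "\<xi> = (\<lambda>s. THE x. RG t \<theta> \<alpha> x s = c)"
  have \<xi>: "RG t \<theta> \<alpha> (\<xi> s) s = c" if "\<bar>s\<bar> < pi/4" for s
    unfolding \<xi>_def using theI'[OF ex1[OF that]] .
  have \<xi>u: "x = \<xi> s" if "\<bar>s\<bar> < pi/4" "RG t \<theta> \<alpha> x s = c" for x s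
    using ex1[OF that(1)] \<xi>[OF that(1)] that(2) by blast
  have \<xi>cont: "isCont \<xi> s" if sI: "\<bar>s\<bar> < pi/4" for s
  proof -
    have "(\<xi> \<longlongrightarrow> \<xi> s) (at s)"
    proof (rule tendstoI)
      fix e :: real assume e: "e > 0"
      have lo: "RG t \<theta> \<alpha> (\<xi> s - e) s < c" using mono_strict[OF sI, of "\<xi> s - e" "\<xi> s"] \<xi>[OF sI] e by simp
      have hi: "RG t \<theta> \<alpha> (\<xi> s + e) s > c" using mono_strict[OF sI, of "\<xi> s" "\<xi> s + e"] \<xi>[OF sI] e by simp
      have ev1: "eventually (\<lambda>s'. RG t \<theta> \<alpha> (\<xi> s - e) s' < c) (at s)"
        using order_tendstoD(2)[OF RG_cont_s[OF sI, of "\<xi> s - e", unfolded isCont_def] lo] .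
      have ev2: "eventually (\<lambda>s'. RG t \<theta> \<alpha> (\<xi> s + e) s' > c) (at s)"
        using order_tendstoD(1)[OF RG_cont_s[OF sI, of "\<xi> s + e", unfolded isCont_def] hi] .
      have ev3: "eventually (\<lambda>s'. s' \<in> I) (at s)"
        using sI by (intro eventually_at_in_open') (auto simp: I_def)
      show "eventually (\<lambda>s'. dist (\<xi> s') (\<xi> s) < e) (at s)"
        using ev1 ev2 ev3
      proof eventually_elim
        case (elim s')
        hence s'I: "\<bar>s'\<bar> < pi/4" using inI by blast
        have "\<xi> s' > \<xi> s - e"
        proof (rule ccontr)
          assume "\<not> ?thesis"
          hence "RG t \<theta> \<alpha> (\<xi> s') s' \<le> RG t \<theta> \<alpha> (\<xi> s - e) s'" by (intro mono_le[OF s'I]) simp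
          thus False using elim \<xi>[OF s'I] by simp
        qed
        moreover have "\<xi> s' < \<xi> s + e"
        proof (rule ccontr)
          assume "\<not> ?thesis"
          hence "RG t \<theta> \<alpha> (\<xi> s + e) s' \<le> RG t \<theta> \<alpha> (\<xi> s') s'" by (intro mono_le[OF s'I]) simp
          thus False using elim \<xi>[OF s'I] by simp
        qed
        ultimately show ?case by (simp add: dist_real_def abs_less_iff)
      qed
    qed
    thus ?thesis by (simp add: isCont_def)
  qed
  define \<gamma> where "\<gamma> = (\<lambda>s. Gf t \<theta> \<alpha> (complex_of_real (\<xi> s) + \<i> * complex_of_real s))"
  have img: "Fx t \<theta> \<alpha> ` \<E> \<inter> {w. Re w = c} = \<gamma> ` I"
  proof
    show "Fx t \<theta> \<alpha> ` \<E> \<inter> {w. Re w = c} \<subseteq> \<gamma> ` I"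
    proof
      fix w assume "w \<in> Fx t \<theta> \<alpha> ` \<E> \<inter> {w. Re w = c}"
      then obtain z where z: "z \<in> \<E>" "w = Fx t \<theta> \<alpha> z" "Re w = c" by auto
      obtain \<zeta> where \<zeta>: "\<zeta> \<in> Sst" "Tm \<zeta> = z" using Tm_surj[OF z(1)] by blast
      have sI: "\<bar>Im \<zeta>\<bar> < pi/4" using \<zeta> by (simp add: Sst_def)
      have e: "complex_of_real (Re \<zeta>) + \<i> * complex_of_real (Im \<zeta>) = \<zeta>" by (simp add: complex_eq_iff)
      have "RG t \<theta> \<alpha> (Re \<zeta>) (Im \<zeta>) = c" using z \<zeta> e by (simp add: RG_def Gf_def)
      hence "Re \<zeta> = \<xi> (Im \<zeta>)" using \<xi>u[OF sI] by blast
      hence "w = \<gamma> (Im \<zeta>)" using z \<zeta> e by (simp add: \<gamma>_def Gf_def)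
      thus "w \<in> \<gamma> ` I" using sI inI by blast
    qed
    show "\<gamma> ` I \<subseteq> Fx t \<theta> \<alpha> ` \<E> \<inter> {w. Re w = c}"
    proof
      fix w assume "w \<in> \<gamma> ` I"
      then obtain s where s: "s \<in> I" "w = \<gamma> s" by auto
      hence sI: "\<bar>s\<bar> < pi/4" using inI by blast
      have S: "complex_of_real (\<xi> s) + \<i> * complex_of_real s \<in> Sst" using sI by (simp add: Sst_def)
      have "w = Fx t \<theta> \<alpha> (Tm (complex_of_real (\<xi> s) + \<i> * complex_of_real s))"
        using s by (simp add: \<gamma>_def Gf_def)
      moreover have "Re w = c" using \<xi>[OF sI] s by (simp add: \<gamma>_def RG_def)
      ultimately show "w \<in> Fx t \<theta> \<alpha> ` \<E> \<inter> {w. Re w = c}" using Tm_in(1)[OF S] by auto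
    qed
  qed
  have "continuous_on I \<gamma>"
  proof (intro continuous_at_imp_continuous_on ballI)
    fix s assume "s \<in> I"
    hence sI: "\<bar>s\<bar> < pi/4" using inI by blast
    have p: "isCont (\<lambda>s. complex_of_real (\<xi> s) + \<i> * complex_of_real s) s"
      using \<xi>cont[OF sI] by (intro continuous_intros) auto
    have "isCont (Gf t \<theta> \<alpha>) (complex_of_real (\<xi> s) + \<i> * complex_of_real s)"
      using sI by (intro Gf_isCont) (simp add: Sst_def)
    thus "isCont \<gamma> s" unfolding \<gamma>_def using isCont_o2[OF p] by blast
  qed
  hence "connected (\<gamma> ` I)" by (intro connected_continuous_image) (auto simp: I_def)
  thus ?thesis using img by simp
qed

end



lemma key_ineq:
  fixes A B :: complex
  assumes "A + B = 1" "cmod B < cmod A"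
  shows "Re A - Re B > 0"
proof -
  have "B = 1 - A" using assms by (simp add: algebra_simps)
  hence "(cmod (1 - A))^2 < (cmod A)^2" using assms
    by (metis norm_ge_zero power_strict_mono zero_less_numeral)
  hence "(1 - Re A)^2 + (Im A)^2 < (Re A)^2 + (Im A)^2"
    by (simp add: cmod_power2)
  hence "Re A > 1/2" by (simp add: power2_eq_square algebra_simps)
  thus ?thesis using \<open>B = 1 - A\<close> by simp
qed

lemma shear:
  fixes h g :: "complex \<Rightarrow> complex"
  assumes hol: "h holomorphic_on \<E>" "g holomorphic_on \<E>"
    and lu: "loc_univ_sense_pres h g"
    and injF: "inj_on (\<lambda>z. h z + g z) \<E>"
    and cid: "\<And>c. connected ((\<lambda>z. h z + g z) ` \<E> \<inter> {w. Re w = c})"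
  shows "inj_on (harm h g) \<E> \<and> open (harm h g ` \<E>) \<and> convex_imag_dir (harm h g ` \<E>)"
proof -
  define F where "F = (\<lambda>z. h z + g z)"
  have oE: "open \<E>" by (simp add: unit_disk_def)
  have holF: "F holomorphic_on \<E>" unfolding F_def using hol by (intro holomorphic_intros)
  obtain K where holK: "K holomorphic_on (F ` \<E>)"
     and dK: "\<And>z. z \<in> \<E> \<Longrightarrow> deriv F z * deriv K (F z) = 1"
     and KF: "\<And>z. z \<in> \<E> \<Longrightarrow> K (F z) = z"
    using holomorphic_has_inverse[OF holF oE] injF unfolding F_def by metis
  have oFE: "open (F ` \<E>)"
    by (rule open_mapping_thm3[OF holF oE]) (use injF in \<open>simp add: F_def\<close>)
  have ReH: "Re (harm h g z) = Re (F z)" for z by (simp add: harm_def F_def)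
  have contH: "continuous_on \<E> (harm h g)"
    unfolding harm_def using hol
    by (intro continuous_intros holomorphic_on_imp_continuous_on)
  have key: "Im (harm h g (K w1)) < Im (harm h g (K w2))"
    if w: "w1 \<in> F ` \<E>" "w2 \<in> F ` \<E>" "Re w1 = Re w2" "Im w1 < Im w2" for w1 w2
  proof -
    define c where "c = Re w1"
    define \<Lambda> where "\<Lambda> = F ` \<E> \<inter> {w. Re w = c}"
    have con: "connected \<Lambda>" unfolding \<Lambda>_def F_def by (rule cid)
    have inL: "complex_of_real c + \<i> * of_real y \<in> F ` \<E>" if yy: "Im w1 \<le> y" "y \<le> Im w2" for y
    proof -
      have "w1 \<in> \<Lambda>" "w2 \<in> \<Lambda>" using w by (auto simp: \<Lambda>_def c_def)
      then obtain z where "z \<in> \<Lambda>" "inner \<i> z = y"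
        using connected_ivt_hyperplane[OF con, of w1 w2 \<i> y] yy by auto
      hence "z = complex_of_real c + \<i> * of_real y" "z \<in> F ` \<E>"
        by (auto simp: \<Lambda>_def complex_eq_iff)
      thus ?thesis by simp
    qed
    define \<phi> where "\<phi> = (\<lambda>y. Im (harm h g (K (complex_of_real c + \<i> * of_real y))))"
    have der: "\<exists>d. DERIV \<phi> y :> d \<and> d > 0" if "Im w1 \<le> y" "y \<le> Im w2" for y
    proof -
      define w where "w = complex_of_real c + \<i> * of_real y"
      have wF: "w \<in> F ` \<E>" using inL that by (simp add: w_def)
      then obtain z where z: "z \<in> \<E>" "w = F z" by auto
      have Kw: "K w = z" using KF z by simp
      have dKw: "(K has_field_derivative deriv K w) (at w)"
        using holomorphic_derivI[OF holK oFE wF] .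
      have dh: "(h has_field_derivative deriv h z) (at (K w))"
        using holomorphic_derivI[OF hol(1) oE z(1)] Kw by simp
      have dg: "(g has_field_derivative deriv g z) (at (K w))"
        using holomorphic_derivI[OF hol(2) oE z(1)] Kw by simp
      have dpath: "((\<lambda>y. complex_of_real c + \<i> * of_real y) has_vector_derivative \<i>) (at y)"
        by (auto intro!: derivative_eq_intros)
      have dKp: "((K \<circ> (\<lambda>y. complex_of_real c + \<i> * of_real y)) has_vector_derivative (\<i> * deriv K w)) (at y)"
        using field_vector_diff_chain_at[OF dpath] dKw by (simp add: w_def)
      have dhp: "((h \<circ> (K \<circ> (\<lambda>y. complex_of_real c + \<i> * of_real y))) has_vector_derivative (\<i> * deriv K w * deriv h z)) (at y)"
        using field_vector_diff_chain_at[OF dKp] dh by (simp add: w_def)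
      have dgp: "((g \<circ> (K \<circ> (\<lambda>y. complex_of_real c + \<i> * of_real y))) has_vector_derivative (\<i> * deriv K w * deriv g z)) (at y)"
        using field_vector_diff_chain_at[OF dKp] dg by (simp add: w_def)
      define A where "A = deriv K w * deriv h z"
      define B where "B = deriv K w * deriv g z"
      have "DERIV \<phi> y :> Im (\<i> * A) - Im (\<i> * B)"
      proof -
        have "DERIV (\<lambda>y. Im ((h \<circ> (K \<circ> (\<lambda>y. complex_of_real c + \<i> * of_real y))) y)
                        - Im ((g \<circ> (K \<circ> (\<lambda>y. complex_of_real c + \<i> * of_real y))) y)) y
               :> Im (\<i> * deriv K w * deriv h z) - Im (\<i> * deriv K w * deriv g z)"
          using DERIV_diff[OF has_field_derivative_Im[OF dhp] has_field_derivative_Im[OF dgp]] .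
        thus ?thesis unfolding \<phi>_def harm_def A_def B_def by (simp add: mult.assoc)
      qed
      moreover have "Im (\<i> * A) - Im (\<i> * B) = Re A - Re B" by simp
      moreover have "Re A - Re B > 0"
      proof (rule key_ineq)
        have dFz: "deriv F z = deriv h z + deriv g z"
          unfolding F_def
          by (rule deriv_add) (use hol oE z(1) in \<open>auto intro: holomorphic_on_imp_differentiable_at\<close>)
        show "A + B = 1" using dK[OF z(1)] z(2) dFz
          by (simp add: A_def B_def algebra_simps)
        hence "deriv K w \<noteq> 0" by (auto simp: A_def B_def)
        moreover have "cmod (deriv g z) < cmod (deriv h z)"
          using lu z(1) unfolding loc_univ_sense_pres_def
          by (auto simp: norm_divide divide_less_eq)
        ultimately show "cmod B < cmod A" by (simp add: A_def B_def norm_mult)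
      qed
      ultimately show ?thesis by auto
    qed
    have "\<phi> (Im w1) < \<phi> (Im w2)"
      by (rule DERIV_pos_imp_increasing[OF that(4)]) (use der in auto)
    moreover have "complex_of_real c + \<i> * of_real (Im w1) = w1"
      "complex_of_real c + \<i> * of_real (Im w2) = w2"
      using that by (auto simp: c_def complex_eq_iff)
    ultimately show ?thesis by (simp add: \<phi>_def)
  qed
  have inj: "inj_on (harm h g) \<E>"
  proof (rule inj_onI)
    fix z1 z2 assume z: "z1 \<in> \<E>" "z2 \<in> \<E>" "harm h g z1 = harm h g z2"
    have re: "Re (F z1) = Re (F z2)" using z(3) ReH by metis
    show "z1 = z2"
    proof (cases "Im (F z1) = Im (F z2)")
      case True
      hence "F z1 = F z2" using re by (simp add: complex_eq_iff)
      thus ?thesis using injF z unfolding F_def by (auto dest: inj_onD)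
    next
      case False
      then consider "Im (F z1) < Im (F z2)" | "Im (F z2) < Im (F z1)" by linarith
      thus ?thesis
      proof cases
        case 1
        from key[of "F z1" "F z2"] 1 re z show ?thesis by (simp add: KF)
      next
        case 2
        from key[of "F z2" "F z1"] 2 re z show ?thesis by (simp add: KF)
      qed
    qed
  qed
  have op: "open (harm h g ` \<E>)"
    by (rule invariance_of_domain[OF contH oE inj])
  have cidH: "convex_imag_dir (harm h g ` \<E>)"
    unfolding convex_imag_dir_def
  proof
    fix c :: real
    have eq: "harm h g ` \<E> \<inter> {w. Re w = c} = (harm h g \<circ> K) ` (F ` \<E> \<inter> {w. Re w = c})"
    proof
      show "harm h g ` \<E> \<inter> {w. Re w = c} \<subseteq> (harm h g \<circ> K) ` (F ` \<E> \<inter> {w. Re w = c})"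
      proof (rule subsetI)
        fix v assume "v \<in> harm h g ` \<E> \<inter> {w. Re w = c}"
        then obtain z where "z \<in> \<E>" "Re (harm h g z) = c" "v = harm h g z" by auto
        thus "v \<in> (harm h g \<circ> K) ` (F ` \<E> \<inter> {w. Re w = c})"
        proof (intro image_eqI)
          show "v = (harm h g \<circ> K) (F z)" using KF \<open>z \<in> \<E>\<close> \<open>v = harm h g z\<close> by simp
          show "F z \<in> F ` \<E> \<inter> {w. Re w = c}" using \<open>z \<in> \<E>\<close> \<open>Re (harm h g z) = c\<close> ReH by auto
        qed
      qed
      show "(harm h g \<circ> K) ` (F ` \<E> \<inter> {w. Re w = c}) \<subseteq> harm h g ` \<E> \<inter> {w. Re w = c}"
        using KF ReH by auto
    qed
    have "continuous_on (F ` \<E> \<inter> {w. Re w = c}) (harm h g \<circ> K)"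
    proof (rule continuous_on_compose)
      show "continuous_on (F ` \<E> \<inter> {w. Re w = c}) K"
        using holomorphic_on_imp_continuous_on[OF holK] continuous_on_subset by blast
      have "K ` (F ` \<E> \<inter> {w. Re w = c}) \<subseteq> \<E>" using KF by auto
      thus "continuous_on (K ` (F ` \<E> \<inter> {w. Re w = c})) (harm h g)"
        using contH continuous_on_subset by blast
    qed
    moreover have "connected (F ` \<E> \<inter> {w. Re w = c})" unfolding F_def by (rule cid)
    ultimately show "connected (harm h g ` \<E> \<inter> {w. Re w = c})"
      unfolding eq by (rule connected_continuous_image)
  qed
  show ?thesis using inj op cidH by blast
qed


theorem theorem2p12:
  fixes \<theta> \<alpha> t :: real
    and h\<^sub>\<theta> g\<^sub>\<theta> h\<^sub>\<alpha> g\<^sub>\<alpha> :: "complex \<Rightarrow> complex"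
  assumes "0 < \<theta>" "\<theta> < pi"
    and "S_H h\<^sub>\<theta> g\<^sub>\<theta>"
    and "\<forall>z\<in>\<E>. h\<^sub>\<theta> z + g\<^sub>\<theta> z =
           1 / (2 * \<i> * complex_of_real (sin \<theta>)) *
           Ln ((1 + z * exp (\<i> * \<theta>)) / (1 + z * exp (- \<i> * \<theta>)))"
    and "-1 \<le> \<alpha>" "\<alpha> \<le> 1"
    and "S_H h\<^sub>\<alpha> g\<^sub>\<alpha>"
    and "\<forall>z\<in>\<E>. h\<^sub>\<alpha> z + g\<^sub>\<alpha> z = z * (1 - \<alpha> * z) / (1 - z\<^sup>2)"
    and "0 \<le> t" "t \<le> 1"
    and "loc_univ_sense_pres
           (\<lambda>z. t * h\<^sub>\<theta> z + (1 - t) * h\<^sub>\<alpha> z)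
           (\<lambda>z. t * g\<^sub>\<theta> z + (1 - t) * g\<^sub>\<alpha> z)"
  shows "S_H (\<lambda>z. t * h\<^sub>\<theta> z + (1 - t) * h\<^sub>\<alpha> z)
             (\<lambda>z. t * g\<^sub>\<theta> z + (1 - t) * g\<^sub>\<alpha> z)
       \<and> open (harm (\<lambda>z. t * h\<^sub>\<theta> z + (1 - t) * h\<^sub>\<alpha> z)
                     (\<lambda>z. t * g\<^sub>\<theta> z + (1 - t) * g\<^sub>\<alpha> z) ` \<E>)
       \<and> connected (harm (\<lambda>z. t * h\<^sub>\<theta> z + (1 - t) * h\<^sub>\<alpha> z)
                     (\<lambda>z. t * g\<^sub>\<theta> z + (1 - t) * g\<^sub>\<alpha> z) ` \<E>)
       \<and> convex_imag_dir (harm (\<lambda>z. t * h\<^sub>\<theta> z + (1 - t) * h\<^sub>\<alpha> z)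
                     (\<lambda>z. t * g\<^sub>\<theta> z + (1 - t) * g\<^sub>\<alpha> z) ` \<E>)"
proof -
  define h where "h = (\<lambda>z. t * h\<^sub>\<theta> z + (1 - t) * h\<^sub>\<alpha> z)"
  define g where "g = (\<lambda>z. t * g\<^sub>\<theta> z + (1 - t) * g\<^sub>\<alpha> z)"
  have oE: "open \<E>" by (simp add: unit_disk_def)
  have 0: "0 \<in> \<E>" by (simp add: unit_disk_def)
  have sh1: "h\<^sub>\<theta> holomorphic_on \<E>" "g\<^sub>\<theta> holomorphic_on \<E>" "harm h\<^sub>\<theta> g\<^sub>\<theta> 0 = 0" "deriv h\<^sub>\<theta> 0 = 1"
    using assms(3) by (auto simp: S_H_def)
  have sh2: "h\<^sub>\<alpha> holomorphic_on \<E>" "g\<^sub>\<alpha> holomorphic_on \<E>" "harm h\<^sub>\<alpha> g\<^sub>\<alpha> 0 = 0" "deriv h\<^sub>\<alpha> 0 = 1"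
    using assms(7) by (auto simp: S_H_def)
  have holh: "h holomorphic_on \<E>" unfolding h_def using sh1 sh2 by (intro holomorphic_intros)
  have holg: "g holomorphic_on \<E>" unfolding g_def using sh1 sh2 by (intro holomorphic_intros)
  interpret prm t \<theta> \<alpha> using assms by unfold_locales auto
  have FF: "h z + g z = Fx t \<theta> \<alpha> z" if "z \<in> \<E>" for z
  proof -
    have "h z + g z = t * (h\<^sub>\<theta> z + g\<^sub>\<theta> z) + (1 - t) * (h\<^sub>\<alpha> z + g\<^sub>\<alpha> z)"
      by (simp add: h_def g_def algebra_simps)
    also have "\<dots> = Fx t \<theta> \<alpha> z" using assms(4,8) that by (simp add: Fx_def Fth_def Fal_def)
    finally show ?thesis .
  qed
  have injF: "inj_on (\<lambda>z. h z + g z) \<E>"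
    using Fx_inj[OF sin_ne tt al] inj_on_cong[of \<E> "\<lambda>z. h z + g z" "Fx t \<theta> \<alpha>"] FF by blast
  have imgF: "(\<lambda>z. h z + g z) ` \<E> = Fx t \<theta> \<alpha> ` \<E>" using FF by (rule image_cong[OF refl])
  have cid: "connected ((\<lambda>z. h z + g z) ` \<E> \<inter> {w. Re w = c})" for c
    unfolding imgF by (rule level_connected)
  have lu: "loc_univ_sense_pres h g" using assms(11) by (simp add: h_def g_def)
  have sh: "inj_on (harm h g) \<E> \<and> open (harm h g ` \<E>) \<and> convex_imag_dir (harm h g ` \<E>)"
    by (rule shear[OF holh holg lu injF cid])
  have h0: "harm h g 0 = 0"
  proof -
    have "harm h g 0 = t * harm h\<^sub>\<theta> g\<^sub>\<theta> 0 + (1 - t) * harm h\<^sub>\<alpha> g\<^sub>\<alpha> 0"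
      by (simp add: harm_def h_def g_def algebra_simps)
    thus ?thesis using sh1 sh2 by simp
  qed
  have d0: "deriv h 0 = 1"
  proof -
    have "(h has_field_derivative t * deriv h\<^sub>\<theta> 0 + (1 - t) * deriv h\<^sub>\<alpha> 0) (at 0)"
      unfolding h_def
      by (intro DERIV_add DERIV_cmult holomorphic_derivI[OF sh1(1) oE 0] holomorphic_derivI[OF sh2(1) oE 0])
    hence "deriv h 0 = t * deriv h\<^sub>\<theta> 0 + (1 - t) * deriv h\<^sub>\<alpha> 0" by (rule DERIV_imp_deriv)
    thus ?thesis using sh1 sh2 by simp
  qed
  have contH: "continuous_on \<E> (harm h g)"
    unfolding harm_def using holh holg
    by (intro continuous_intros holomorphic_on_imp_continuous_on)
  have con: "connected (harm h g ` \<E>)"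
    by (rule connected_continuous_image[OF contH]) (simp add: unit_disk_def)
  have "S_H h g" unfolding S_H_def using holh holg sh lu h0 d0 by blast
  thus ?thesis using sh con unfolding h_def g_def by blast
qed

end
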